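(* For $x\in(0,1)$ let $$F(x)=\frac{B(1/2+x,3/2-x)}{x(1-x)}+R(1/2+x,3/2-x)-R(x,1-x),$$ and for $b>0$ let $$f_b(x)=\Big(\frac1x+\frac1b\Big)B(1/2+x,1/2+b)+R(1/2+x,1/2+b)-R(x,b).$$ (1) $F$ is strictly completely monotonic on $(0,1/2)$ and absolutely monotonic on $(1/2,1)$, and $4-4\log2\leq F(x)$ for all $x\in(0,1)$, with equality if and only if $x=1/2$. (2) For every $b\in(0,1)$, $f_b$ is strictly completely monotonic on $(0,1-b)$.
   Context: $B(x,y)=\Gamma(x)\Gamma(y)/\Gamma(x+y)$, $\psi=\Gamma'/\Gamma$, $\gamma=-\psi(1)$, $R(a,b)=-2\gamma-\psi(a)-\psi(b)$. A function $f$ on an interval $I$ is strictly completely monotonic if $(-1)^nf^{(n)}(x)>0$ for all $n\geq0$, $x\in I$; absolutely monotonic if $f^{(n)}(x)\geq0$ for all $n\ge0$, $x\in I$. *)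

theory Defs
  imports "HOL-Analysis.Analysis"
begin

definition R :: "real \<Rightarrow> real \<Rightarrow> real" where
  "R a b = - 2 * euler_mascheroni - Digamma a - Digamma b"

definition F :: "real \<Rightarrow> real" where
  "F x = Beta (1/2 + x) (3/2 - x) / (x * (1 - x)) + R (1/2 + x) (3/2 - x) - R x (1 - x)"

definition fb :: "real \<Rightarrow> real \<Rightarrow> real" where
  "fb b x = (1/x + 1/b) * Beta (1/2 + x) (1/2 + b) + R (1/2 + x) (1/2 + b) - R x b"

definition strictly_completely_monotonic_on :: "real set \<Rightarrow> (real \<Rightarrow> real) \<Rightarrow> bool" where
  "strictly_completely_monotonic_on I f \<longleftrightarrow>
     (\<forall>n. \<forall>x\<in>I. ((deriv ^^ n) f has_real_derivative (deriv ^^ Suc n) f x) (at x)) \<and>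
     (\<forall>n. \<forall>x\<in>I. (-1) ^ n * (deriv ^^ n) f x > 0)"

definition absolutely_monotonic_on :: "real set \<Rightarrow> (real \<Rightarrow> real) \<Rightarrow> bool" where
  "absolutely_monotonic_on I f \<longleftrightarrow>
     (\<forall>n. \<forall>x\<in>I. ((deriv ^^ n) f has_real_derivative (deriv ^^ Suc n) f x) (at x)) \<and>
     (\<forall>n. \<forall>x\<in>I. (deriv ^^ n) f x \<ge> 0)"

end

theory Submission
  imports Defs
begin


definition dchain :: "real set \<Rightarrow> (nat \<Rightarrow> real \<Rightarrow> real) \<Rightarrow> bool" where
  "dchain S D \<longleftrightarrow> (\<forall>n. \<forall>x\<in>S. (D n has_real_derivative D (Suc n) x) (at x))"

lemma dchain_D: "dchain S D \<Longrightarrow> x \<in> S \<Longrightarrow> (D n has_real_derivative D (Suc n) x) (at x)"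
  unfolding dchain_def by blast

lemma dchain_higher:
  assumes "open S" "dchain S D" "\<And>x. x \<in> S \<Longrightarrow> f x = D 0 x"
  shows "\<forall>x\<in>S. (deriv ^^ n) f x = D n x"
proof (induction n)
  case 0 then show ?case using assms by simp
next
  case (Suc n)
  show ?case
  proof
    fix x assume x: "x \<in> S"
    have ev: "eventually (\<lambda>y. (deriv ^^ n) f y = D n y) (nhds x)"
      unfolding eventually_nhds using Suc x assms(1) by blast
    have "(deriv ^^ Suc n) f x = deriv ((deriv ^^ n) f) x" by simp
    also have "\<dots> = deriv (D n) x" by (rule deriv_cong_ev[OF ev refl])
    also have "\<dots> = D (Suc n) x" using dchain_D[OF assms(2) x] by (rule DERIV_imp_deriv)
    finally show "(deriv ^^ Suc n) f x = D (Suc n) x" .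
  qed
qed

lemma dchain_higher_deriv:
  assumes "open S" "dchain S D" "\<And>x. x \<in> S \<Longrightarrow> f x = D 0 x" "x \<in> S"
  shows "((deriv ^^ n) f has_real_derivative (deriv ^^ Suc n) f x) (at x)"
proof -
  have e: "\<forall>x\<in>S. (deriv ^^ m) f x = D m x" for m using dchain_higher[OF assms(1-3)] .
  have "(D n has_real_derivative D (Suc n) x) (at x)" using dchain_D[OF assms(2,4)] .
  then have "((deriv ^^ n) f has_real_derivative D (Suc n) x) (at x)"
    by (rule has_field_derivative_transform_within_open[OF _ assms(1,4)]) (use e in auto)
  then show ?thesis using e assms(4) by metis
qed

lemma dchain_subset: "dchain S D \<Longrightarrow> T \<subseteq> S \<Longrightarrow> dchain T D"
  unfolding dchain_def by blast

lemma dchain_add: "dchain S D1 \<Longrightarrow> dchain S D2 \<Longrightarrow> dchain S (\<lambda>n x. D1 n x + D2 n x)"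
  unfolding dchain_def by (auto intro!: derivative_eq_intros)

lemma dchain_diff: "dchain S D1 \<Longrightarrow> dchain S D2 \<Longrightarrow> dchain S (\<lambda>n x. D1 n x - D2 n x)"
  unfolding dchain_def by (auto intro!: derivative_eq_intros)

lemma dchain_cmult: "dchain S D \<Longrightarrow> dchain S (\<lambda>n x. c * D n x)"
  unfolding dchain_def by (auto intro!: derivative_eq_intros)

lemma dchain_const: "dchain S (\<lambda>n x. if n = 0 then c else 0)"
  unfolding dchain_def by (simp add: DERIV_const)

lemma dchain_Polygamma: "S \<subseteq> {0<..} \<Longrightarrow> dchain S (\<lambda>n x. Polygamma n x)"
  unfolding dchain_def
proof safe
  fix n x assume "S \<subseteq> {0<..}" "x \<in> S"
  then have "x > 0" by auto
  then have "x \<notin> \<int>\<^sub>\<le>\<^sub>0" by (auto elim!: nonpos_Ints_cases)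
  then show "(Polygamma n has_real_derivative Polygamma (Suc n) x) (at x)"
    by (rule has_field_derivative_Polygamma)
qed

lemma dchain_affine:
  assumes "dchain S D"
  shows "dchain {x. a * x + c \<in> S} (\<lambda>n x. a ^ n * D n (a * x + c))"
  unfolding dchain_def
proof safe
  fix n x assume "a * x + c \<in> S"
  then have d: "(D n has_real_derivative D (Suc n) (a * x + c)) (at (a * x + c))"
    using dchain_D[OF assms] by blast
  show "((\<lambda>x. a ^ n * D n (a * x + c)) has_real_derivative a ^ Suc n * D (Suc n) (a * x + c)) (at x)"
  proof -
    have l: "((\<lambda>x. a * x + c) has_real_derivative a) (at x)"
      by (rule derivative_eq_intros | simp)+
    have "((\<lambda>x. D n (a * x + c)) has_real_derivative D (Suc n) (a * x + c) * a) (at x)"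
      using DERIV_chain2[OF d l] .
    from DERIV_cmult[OF this, of "a ^ n"] show ?thesis by (simp add: algebra_simps)
  qed
qed

lemma dchain_inverse:
  assumes "0 \<notin> S"
  shows "dchain S (\<lambda>n x. (-1) ^ n * fact n / x ^ Suc n)"
  unfolding dchain_def
proof safe
  fix n x assume "x \<in> S"
  then have x: "x \<noteq> 0" using assms by auto
  show "((\<lambda>x. (-1) ^ n * fact n / x ^ Suc n) has_real_derivative (-1) ^ Suc n * fact (Suc n) / x ^ Suc (Suc n)) (at x)"
    apply (rule derivative_eq_intros refl | simp add: x)+
    done
qed

lemma dchain_cong:
  assumes "open S" "dchain S D" "\<And>n x. x \<in> S \<Longrightarrow> D n x = D' n x"
  shows "dchain S D'"
  unfolding dchain_def
proof safe
  fix n x assume x: "x \<in> S"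
  have "(D n has_real_derivative D (Suc n) x) (at x)" using dchain_D[OF assms(2) x] .
  then have "(D' n has_real_derivative D (Suc n) x) (at x)"
    by (rule has_field_derivative_transform_within_open[OF _ assms(1) x]) (use assms(3) in auto)
  then show "(D' n has_real_derivative D' (Suc n) x) (at x)" using assms(3)[OF x] by simp
qed

lemma dchain_affine':
  assumes "dchain S D" "\<And>x. x \<in> T \<Longrightarrow> a * x + c \<in> S"
  shows "dchain T (\<lambda>n x. a ^ n * D n (a * x + c))"
  using dchain_subset[OF dchain_affine[OF assms(1), of a c], of T] assms(2) by blast

lemma dchain_unique:
  assumes "open S" "dchain S D1" "dchain S D2" "\<And>x. x \<in> S \<Longrightarrow> D1 0 x = D2 0 x" "x \<in> S"
  shows "D1 n x = D2 n x"
proof -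
  have "\<forall>x\<in>S. (deriv ^^ n) (D1 0) x = D1 n x" by (rule dchain_higher[OF assms(1,2)]) simp
  moreover have "\<forall>x\<in>S. (deriv ^^ n) (D1 0) x = D2 n x" by (rule dchain_higher[OF assms(1,3)]) (use assms(4) in simp)
  ultimately show ?thesis using assms(5) by metis
qed

lemma leib_sum_eq:
  fixes a b :: "nat \<Rightarrow> real"
  shows "(\<Sum>i=0..n. real (n choose i) * (a (Suc i) * b (n - i) + a i * b (Suc (n - i)))) =
         (\<Sum>i=0..Suc n. real (Suc n choose i) * a i * b (Suc n - i))"
proof -
  have "(\<Sum>i=0..Suc n. real (Suc n choose i) * a i * b (Suc n - i)) =
        real (Suc n choose 0) * a 0 * b (Suc n) + (\<Sum>i=0..n. real (Suc n choose Suc i) * a (Suc i) * b (Suc n - Suc i))"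
    by (subst sum.atLeast0_atMost_Suc_shift) simp
  also have "(\<Sum>i=0..n. real (Suc n choose Suc i) * a (Suc i) * b (Suc n - Suc i)) =
        (\<Sum>i=0..n. real (n choose i) * a (Suc i) * b (n - i)) + (\<Sum>i=0..n. real (n choose Suc i) * a (Suc i) * b (n - i))"
    by (simp add: sum.distrib[symmetric] algebra_simps)
  also have "(\<Sum>i=0..n. real (n choose Suc i) * a (Suc i) * b (n - i)) =
             (\<Sum>i=0..Suc n. real (n choose i) * a i * b (Suc n - i)) - real (n choose 0) * a 0 * b (Suc n)"
    by (subst sum.atLeast0_atMost_Suc_shift) simp
  also have "(\<Sum>i=0..Suc n. real (n choose i) * a i * b (Suc n - i)) = (\<Sum>i=0..n. real (n choose i) * a i * b (Suc n - i))"
    by (simp)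
  also have "(\<Sum>i=0..n. real (n choose i) * a i * b (Suc n - i)) = (\<Sum>i=0..n. real (n choose i) * a i * b (Suc (n - i)))"
    by (intro sum.cong refl) (simp add: Suc_diff_le)
  finally show ?thesis by (simp add: sum.distrib algebra_simps)
qed

lemma leib_step:
  assumes "\<And>i. i \<le> n \<Longrightarrow> (D1 i has_real_derivative D1 (Suc i) x) (at x)"
          "\<And>i. i \<le> n \<Longrightarrow> (D2 i has_real_derivative D2 (Suc i) x) (at x)"
  shows "((\<lambda>y. \<Sum>i=0..n. real (n choose i) * D1 i y * D2 (n - i) y) has_real_derivative
           (\<Sum>i=0..Suc n. real (Suc n choose i) * D1 i x * D2 (Suc n - i) x)) (at x)"
proof -
  have "((\<lambda>y. \<Sum>i=0..n. real (n choose i) * D1 i y * D2 (n - i) y) has_real_derivative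
           (\<Sum>i=0..n. real (n choose i) * (D1 (Suc i) x * D2 (n - i) x + D1 i x * D2 (Suc (n - i)) x))) (at x)"
  proof (rule DERIV_sum)
    fix i assume "i \<in> {0..n}"
    then have i: "i \<le> n" by simp
    have "((\<lambda>y. D1 i y * D2 (n - i) y) has_real_derivative
              D1 (Suc i) x * D2 (n - i) x + D1 i x * D2 (Suc (n - i)) x) (at x)"
      using DERIV_mult[OF assms(1)[OF i] assms(2)[of "n - i"]] i by (simp add: algebra_simps)
    from DERIV_cmult[OF this, of "real (n choose i)"]
    show "((\<lambda>y. real (n choose i) * D1 i y * D2 (n - i) y) has_real_derivative
              real (n choose i) * (D1 (Suc i) x * D2 (n - i) x + D1 i x * D2 (Suc (n - i)) x)) (at x)"
      by (simp add: mult.assoc)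
  qed
  then show ?thesis using leib_sum_eq[of n "\<lambda>i. D1 i x" "\<lambda>i. D2 i x"] by simp
qed

lemma dchain_mult:
  assumes "dchain S D1" "dchain S D2"
  shows "dchain S (\<lambda>n x. \<Sum>i=0..n. real (n choose i) * D1 i x * D2 (n - i) x)"
  unfolding dchain_def
  using leib_step[of _ D1 _ D2] dchain_D[OF assms(1)] dchain_D[OF assms(2)] by blast

fun expd :: "(real \<Rightarrow> real) \<Rightarrow> (nat \<Rightarrow> real \<Rightarrow> real) \<Rightarrow> nat \<Rightarrow> real \<Rightarrow> real" where
  "expd f U 0 x = f x"
| "expd f U (Suc n) x = (\<Sum>i=0..n. real (n choose i) * expd f U i x * U (n - i) x)"

lemma dchain_expd:
  assumes "dchain S U" "\<And>x. x \<in> S \<Longrightarrow> (f has_real_derivative f x * U 0 x) (at x)"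
  shows "dchain S (expd f U)"
  unfolding dchain_def
proof (intro allI)
  fix n show "\<forall>x\<in>S. (expd f U n has_real_derivative expd f U (Suc n) x) (at x)"
  proof (induction n rule: less_induct)
    case (less n)
    show ?case
    proof (cases n)
      case 0
      then show ?thesis using assms(2) by (simp add: fun_eq_iff)
    next
      case (Suc m)
      have e: "expd f U (Suc m) = (\<lambda>y. \<Sum>i=0..m. real (m choose i) * expd f U i y * U (m - i) y)"
        by (simp add: fun_eq_iff)
      show ?thesis unfolding Suc e
      proof
        fix x assume x: "x \<in> S"
        have "((\<lambda>y. \<Sum>i=0..m. real (m choose i) * expd f U i y * U (m - i) y) has_real_derivative
           (\<Sum>i=0..Suc m. real (Suc m choose i) * expd f U i x * U (Suc m - i) x)) (at x)"
          by (rule leib_step) (use less x Suc dchain_D[OF assms(1) x] in auto)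
        then show "((\<lambda>y. \<Sum>i=0..m. real (m choose i) * expd f U i y * U (m - i) y) has_real_derivative
           expd f U (Suc (Suc m)) x) (at x)" by simp
      qed
    qed
  qed
qed

lemma expd_nonneg:
  assumes "f x \<ge> 0" "\<And>m. U m x \<ge> 0"
  shows "expd f U n x \<ge> 0"
proof (induction n rule: less_induct)
  case (less n)
  then show ?case using assms
    by (cases n) (auto intro!: sum_nonneg mult_nonneg_nonneg)
qed

lemma expd_cm:
  assumes "f x \<ge> 0" "\<And>m. (-1) ^ m * U m x \<le> 0"
  shows "(-1) ^ n * expd f U n x \<ge> 0"
proof (induction n rule: less_induct)
  case (less n)
  show ?case
  proof (cases n)
    case 0 then show ?thesis using assms by simp
  next
    case (Suc m)
    have "(-1) ^ n * expd f U n x =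
          (\<Sum>i=0..m. real (m choose i) * ((-1) ^ i * expd f U i x) * (- ((-1) ^ (m - i) * U (m - i) x)))"
      unfolding Suc expd.simps sum_distrib_left
    proof (intro sum.cong refl)
      fix i assume "i \<in> {0..m}"
      then have "(-1::real) ^ Suc m = - ((-1) ^ i * (-1) ^ (m - i))"
        by (simp add: power_add[symmetric])
      then show "(-1) ^ Suc m * (real (m choose i) * expd f U i x * U (m - i) x) =
          real (m choose i) * ((-1) ^ i * expd f U i x) * (- ((-1) ^ (m - i) * U (m - i) x))"
        by (simp add: algebra_simps)
    qed
    also have "\<dots> \<ge> 0"
    proof (intro sum_nonneg)
      fix i assume i: "i \<in> {0..m}"
      have a1: "0 \<le> (-1) ^ i * expd f U i x" using less Suc i by auto
      have a2: "0 \<le> - ((-1) ^ (m - i) * U (m - i) x)" using assms(2)[of "m - i"] by simp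
      have a0: "0 \<le> real (m choose i)" by simp
      show "0 \<le> real (m choose i) * ((-1) ^ i * expd f U i x) * (- ((-1) ^ (m - i) * U (m - i) x))"
        by (rule mult_nonneg_nonneg[OF mult_nonneg_nonneg[OF a0 a1] a2])
    qed
    finally show ?thesis .
  qed
qed




lemma pos_not_npi: "(y::real) > 0 \<Longrightarrow> y \<notin> \<int>\<^sub>\<le>\<^sub>0"
  by (auto elim!: nonpos_Ints_cases)

lemma m1sq: "(-1::real) ^ n * ((-1) ^ n * a) = a"
  by (simp add: mult.assoc[symmetric] power_add[symmetric])

definition S1 :: "real set" where "S1 = {-1/2<..<1/2}"

lemma open_S1: "open S1" unfolding S1_def by simp

definition Uh :: "nat \<Rightarrow> real \<Rightarrow> real" where
  "Uh n t = Polygamma n (1 + t) - (-1) ^ n * Polygamma n (1 - t)"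
definition hf :: "real \<Rightarrow> real" where "hf t = Gamma (1 - t) * Gamma (1 + t)"
definition Dq :: "nat \<Rightarrow> real \<Rightarrow> real" where
  "Dq n t = fact n / (1/2 - t) ^ Suc n + (-1) ^ n * fact n / (1/2 + t) ^ Suc n"
definition Dps :: "nat \<Rightarrow> real \<Rightarrow> real" where
  "Dps n t = (-1) ^ n * Polygamma n (1/2 - t) + Polygamma n (1/2 + t)
             - (-1) ^ n * Polygamma n (1 - t) - Polygamma n (1 + t)"
definition DG :: "nat \<Rightarrow> real \<Rightarrow> real" where
  "DG n t = (\<Sum>i=0..n. real (n choose i) * expd hf Uh i t * Dq (n - i) t) + Dps n t"

lemma PG_plus: "dchain T (\<lambda>n t. Polygamma n (c + t))" if "\<And>t. t \<in> T \<Longrightarrow> c + t > 0" "open T"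
proof -
  have "dchain T (\<lambda>n t. 1 ^ n * Polygamma n (1 * t + c))"
    by (rule dchain_affine'[OF dchain_Polygamma[of "{0<..}"]]) (use that in \<open>auto simp: add.commute\<close>)
  then show ?thesis by (rule dchain_cong[OF that(2)]) (simp add: add.commute)
qed

lemma PG_minus: "dchain T (\<lambda>n t. (-1) ^ n * Polygamma n (c - t))" if "\<And>t. t \<in> T \<Longrightarrow> c - t > 0" "open T"
proof -
  have "dchain T (\<lambda>n t. (-1) ^ n * Polygamma n ((-1) * t + c))"
    by (rule dchain_affine'[OF dchain_Polygamma[of "{0<..}"]]) (use that in auto)
  then show ?thesis by (rule dchain_cong[OF that(2)]) simp
qed

lemma INV_plus: "dchain T (\<lambda>n t. (-1) ^ n * fact n / (c + t) ^ Suc n)" if "\<And>t. t \<in> T \<Longrightarrow> c + t > 0" "open T"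
proof -
  have "dchain T (\<lambda>n t. 1 ^ n * ((-1) ^ n * fact n / (1 * t + c) ^ Suc n))"
    by (rule dchain_affine'[OF dchain_inverse[of "{0<..}"]]) (use that in \<open>auto simp: add.commute\<close>)
  then show ?thesis by (rule dchain_cong[OF that(2)]) (simp add: add.commute)
qed

lemma INV_minus: "dchain T (\<lambda>n t. fact n / (c - t) ^ Suc n)" if "\<And>t. t \<in> T \<Longrightarrow> c - t > 0" "open T"
proof -
  have "dchain T (\<lambda>n t. (-1) ^ n * ((-1) ^ n * fact n / ((-1) * t + c) ^ Suc n))"
    by (rule dchain_affine'[OF dchain_inverse[of "{0<..}"]]) (use that in auto)
  then show ?thesis by (rule dchain_cong[OF that(2)]) (simp add: m1sq)
qed

lemma dchain_Uh: "dchain S1 Uh"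
proof -
  have "dchain S1 (\<lambda>n t. Polygamma n (1 + t) - (-1) ^ n * Polygamma n (1 - t))"
    by (intro dchain_diff PG_plus PG_minus open_S1) (auto simp: S1_def)
  then show ?thesis by (rule dchain_cong[OF open_S1]) (simp add: Uh_def)
qed

lemma dchain_Dq: "dchain S1 Dq"
proof -
  have "dchain S1 (\<lambda>n t. fact n / (1/2 - t) ^ Suc n + (-1) ^ n * fact n / (1/2 + t) ^ Suc n)"
    by (intro dchain_add INV_plus INV_minus open_S1) (auto simp: S1_def)
  then show ?thesis by (rule dchain_cong[OF open_S1]) (simp add: Dq_def)
qed

lemma dchain_Dps: "dchain S1 Dps"
proof -
  have "dchain S1 (\<lambda>n t. (-1) ^ n * Polygamma n (1/2 - t) + Polygamma n (1/2 + t)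
             - (-1) ^ n * Polygamma n (1 - t) - Polygamma n (1 + t))"
    by (intro dchain_add dchain_diff PG_plus PG_minus open_S1) (auto simp: S1_def)
  then show ?thesis by (rule dchain_cong[OF open_S1]) (simp add: Dps_def)
qed

lemma hf_deriv:
  assumes "t \<in> S1"
  shows "(hf has_real_derivative hf t * Uh 0 t) (at t)"
proof -
  have a: "1 - t > 0" "1 + t > 0" using assms by (auto simp: S1_def)
  have d1: "((\<lambda>t. Gamma (1 - t)) has_real_derivative Gamma (1 - t) * Digamma (1 - t) * (-1)) (at t)"
  proof -
    have g: "(Gamma has_real_derivative Gamma (1 - t) * Digamma (1 - t)) (at (1 - t))"
      by (rule has_field_derivative_Gamma[OF pos_not_npi[OF a(1)]])
    have l: "((\<lambda>t. 1 - t) has_real_derivative (-1)) (at t)"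
      by (auto intro!: derivative_eq_intros)
    show ?thesis using DERIV_chain2[OF g l] .
  qed
  have d2: "((\<lambda>t. Gamma (1 + t)) has_real_derivative Gamma (1 + t) * Digamma (1 + t) * 1) (at t)"
  proof -
    have g: "(Gamma has_real_derivative Gamma (1 + t) * Digamma (1 + t)) (at (1 + t))"
      by (rule has_field_derivative_Gamma[OF pos_not_npi[OF a(2)]])
    have l: "((\<lambda>t. 1 + t) has_real_derivative 1) (at t)"
      by (auto intro!: derivative_eq_intros)
    show ?thesis using DERIV_chain2[OF g l] .
  qed
  have hh: "hf = (\<lambda>t. Gamma (1 - t) * Gamma (1 + t))" by (simp add: hf_def[abs_def])
  show ?thesis unfolding hh
    by (rule DERIV_cong[OF DERIV_mult[OF d1 d2]]) (simp add: Uh_def algebra_simps)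
qed

lemma dchain_hf: "dchain S1 (expd hf Uh)"
  by (rule dchain_expd[OF dchain_Uh hf_deriv])

lemma dchain_DG: "dchain S1 DG"
proof -
  have "dchain S1 (\<lambda>n t. (\<Sum>i=0..n. real (n choose i) * expd hf Uh i t * Dq (n - i) t) + Dps n t)"
    by (intro dchain_add dchain_mult dchain_hf dchain_Dq dchain_Dps)
  then show ?thesis by (rule dchain_cong[OF open_S1]) (simp add: DG_def)
qed

lemma Uh_nonneg:
  assumes "0 \<le> t" "t < 1/2"
  shows "Uh m t \<ge> 0"
proof (cases "even m")
  case True
  then have "Polygamma m (1 - t) \<le> Polygamma m (1 + t)"
    using assms by (intro Polygamma_real_mono) auto
  then show ?thesis using True by (simp add: Uh_def)
next
  case False
  then have "Polygamma m (1 - t) > 0" "Polygamma m (1 + t) > 0"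
    using assms by (auto intro!: Polygamma_real_odd_pos pos_not_npi)
  then show ?thesis using False by (simp add: Uh_def)
qed

lemma hf_pos: "t \<in> S1 \<Longrightarrow> hf t > 0"
  by (auto simp: hf_def S1_def)

lemma hf_ge1:
  assumes "0 \<le> t" "t < 1/2"
  shows "hf t \<ge> 1"
proof -
  have "hf 0 \<le> hf t"
  proof (rule DERIV_nonneg_imp_nondecreasing[OF assms(1)])
    fix x assume x: "0 \<le> x" "x \<le> t"
    then have "x \<in> S1" using assms by (auto simp: S1_def)
    then show "\<exists>y. (hf has_real_derivative y) (at x) \<and> y \<ge> 0"
    proof (intro exI conjI)
      show "(hf has_real_derivative hf x * Uh 0 x) (at x)" using hf_deriv \<open>x \<in> S1\<close> .
      have "hf x > 0" using hf_pos \<open>x \<in> S1\<close> .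
      moreover have "Uh 0 x \<ge> 0" using Uh_nonneg[of x 0] x assms by simp
      ultimately show "hf x * Uh 0 x \<ge> 0" by simp
    qed
  qed
  then show ?thesis by (simp add: hf_def)
qed

lemma Dq_nonneg:
  assumes "0 \<le> t" "t < 1/2"
  shows "Dq n t \<ge> 0"
proof -
  have le: "(1/2 - t) ^ Suc n \<le> (1/2 + t) ^ Suc n"
    using assms by (intro power_mono) auto
  have p: "(1/2 - t) ^ Suc n > 0" using assms by simp
  have "fact n / (1/2 + t) ^ Suc n \<le> fact n / (1/2 - t) ^ Suc n"
    by (rule divide_left_mono[OF le]) (use p assms in auto)
  moreover have "fact n / (1/2 + t) ^ Suc n \<ge> (0::real)" using assms by simp
  ultimately show ?thesis unfolding Dq_def
    by (cases "even n") (auto simp: divide_nonneg_pos)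
qed

lemma PG_shift_deriv:
  assumes "z + c > 0"
  shows "((\<lambda>z. Polygamma n (z + c)) has_real_derivative Polygamma (Suc n) (z + c)) (at z)"
proof -
  have g: "(Polygamma n has_real_derivative Polygamma (Suc n) (z + c)) (at (z + c))"
    by (rule has_field_derivative_Polygamma[OF pos_not_npi[OF assms]])
  have l: "((\<lambda>z. z + c) has_real_derivative 1) (at z)"
    by (auto intro!: derivative_eq_intros)
  show ?thesis using DERIV_chain2[OF g l] by simp
qed

lemma key4:
  assumes "0 < t" "t < 1/2" "n \<ge> 1"
  shows "Dq n t + Dps n t > 0"
proof -
  define s :: real where "s = (-1) ^ n"
  have ss: "s * s = 1" unfolding s_def by (simp add: power_add[symmetric])
  define A where "A = fact n / (1/2 - t) ^ Suc n"
  define B where "B = fact n / (1/2 + t) ^ Suc n"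
  have e1: "Polygamma n (3/2 - t) = Polygamma n (1/2 - t) + s * A"
  proof -
    have p: "Polygamma n ((1/2 - t) + 1) = Polygamma n (1/2 - t) + (-1) ^ n * fact n / (1/2 - t) ^ Suc n"
      by (rule Polygamma_plus1) (use assms in simp)
    have h: "(1/2 - t) + 1 = 3/2 - t" by simp
    show ?thesis using p unfolding h s_def A_def by (simp only: times_divide_eq_right)
  qed
  have e2: "Polygamma n (3/2 + t) = Polygamma n (1/2 + t) + s * B"
  proof -
    have p: "Polygamma n ((1/2 + t) + 1) = Polygamma n (1/2 + t) + (-1) ^ n * fact n / (1/2 + t) ^ Suc n"
      by (rule Polygamma_plus1) (use assms in simp)
    have h: "(1/2 + t) + 1 = 3/2 + t" by simp
    show ?thesis using p unfolding h s_def B_def by (simp only: times_divide_eq_right)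
  qed
  have eq: "Dq n t + Dps n t = s * (Polygamma n (3/2 - t) - Polygamma n (1 - t))
            + (Polygamma n (3/2 + t) - Polygamma n (1 + t)) + (1 - s * s) * A"
  proof -
    have dq: "Dq n t = A + s * B" unfolding Dq_def A_def B_def s_def by (simp only: times_divide_eq_right)
    have e1': "Polygamma n (1/2 - t) = Polygamma n (3/2 - t) - s * A" using e1 by simp
    have e2': "Polygamma n (1/2 + t) = Polygamma n (3/2 + t) - s * B" using e2 by simp
    show ?thesis unfolding dq Dps_def s_def[symmetric] e1' e2' by (simp add: algebra_simps)
  qed
  show ?thesis
  proof (cases "even n")
    case True
    then have s1: "s = 1" by (simp add: s_def)
    have "Polygamma n (1 - t) < Polygamma n (3/2 - t)"
      using assms True by (intro Polygamma_real_strict_mono) auto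
    moreover have "Polygamma n (1 + t) < Polygamma n (3/2 + t)"
      using assms True by (intro Polygamma_real_strict_mono) auto
    ultimately show ?thesis unfolding eq ss s1 by simp
  next
    case False
    then have s1: "s = -1" by (simp add: s_def)
    define De where "De = (\<lambda>z::real. Polygamma n (z + 1/2) - Polygamma n (z + 0))"
    have "De (1 - t) < De (1 + t)"
    proof (rule DERIV_pos_imp_increasing[of "1 - t" "1 + t" De])
      show "1 - t < 1 + t" using assms by simp
    next
      fix x assume x: "1 - t \<le> x" "x \<le> 1 + t"
      then have xp: "x > 0" using assms by simp
      have "(De has_real_derivative Polygamma (Suc n) (x + 1/2) - Polygamma (Suc n) (x + 0)) (at x)"
        unfolding De_def by (intro DERIV_diff PG_shift_deriv) (use xp in auto)
      moreover have "Polygamma (Suc n) (x + 0) < Polygamma (Suc n) (x + 1/2)"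
        using False xp by (intro Polygamma_real_strict_mono) auto
      ultimately show "\<exists>y. (De has_real_derivative y) (at x) \<and> 0 < y" by auto
    qed
    then have "Polygamma n (3/2 - t) - Polygamma n (1 - t) < Polygamma n (3/2 + t) - Polygamma n (1 + t)"
      unfolding De_def by (simp add: algebra_simps)
    then show ?thesis unfolding eq ss s1 by simp
  qed
qed

lemma S1_mem: "0 \<le> t \<Longrightarrow> t < 1/2 \<Longrightarrow> t \<in> S1"
  by (simp add: S1_def)

lemma DG_pos:
  assumes "0 < t" "t < 1/2" "n \<ge> 1"
  shows "DG n t > 0"
proof -
  have tS: "t \<in> S1" using assms by (simp add: S1_def)
  have "hf t * Dq n t \<le> (\<Sum>i=0..n. real (n choose i) * expd hf Uh i t * Dq (n - i) t)"
  proof -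
    have "(\<Sum>i=0..n. real (n choose i) * expd hf Uh i t * Dq (n - i) t) \<ge>
          real (n choose 0) * expd hf Uh 0 t * Dq (n - 0) t"
    proof (rule member_le_sum)
      fix i assume "i \<in> {0..n} - {0}"
      have "expd hf Uh i t \<ge> 0"
        using expd_nonneg[of hf t Uh] hf_pos[OF tS] Uh_nonneg assms by force
      moreover have "Dq (n - i) t \<ge> 0" using Dq_nonneg assms by simp
      ultimately show "0 \<le> real (n choose i) * expd hf Uh i t * Dq (n - i) t" by simp
    qed simp_all
    then show ?thesis by simp
  qed
  moreover have "Dq n t \<le> hf t * Dq n t"
    using hf_ge1[of t] Dq_nonneg[of t n] assms mult_right_mono[of 1 "hf t" "Dq n t"] by simp
  moreover have "Dq n t + Dps n t > 0" by (rule key4[OF assms])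
  ultimately show ?thesis unfolding DG_def by linarith
qed

lemma DG0: "DG 0 t = hf t * (1 / (1/2 - t) + 1 / (1/2 + t)) +
   (Digamma (1/2 - t) + Digamma (1/2 + t) - Digamma (1 - t) - Digamma (1 + t))"
  by (simp add: DG_def Dq_def Dps_def)

lemma DG_even:
  assumes "t \<in> S1"
  shows "DG n (-t) = (-1) ^ n * DG n t"
proof -
  have ch: "dchain S1 (\<lambda>n t. (-1) ^ n * DG n ((-1) * t + 0))"
    by (rule dchain_affine'[OF dchain_DG]) (auto simp: S1_def)
  have "DG n t = (-1) ^ n * DG n ((-1) * t + 0)"
  proof (rule dchain_unique[OF open_S1 dchain_DG ch _ assms])
    fix x show "DG 0 x = (-1) ^ 0 * DG 0 ((-1) * x + 0)"
      unfolding DG0 by (simp add: hf_def algebra_simps)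
  qed
  then show ?thesis by (simp add: m1sq)
qed

lemma DG00: "DG 0 0 = 4 - 4 * ln 2"
  unfolding DG0 by (simp add: hf_def Digamma_one_half)

lemma ln2_lt1: "ln (2::real) < 1"
  using ln2_le_25_over_36 by simp

lemma G_gt:
  assumes "0 < t" "t < 1/2"
  shows "DG 0 t > DG 0 0"
proof (rule DERIV_pos_imp_increasing_open[OF assms(1)])
  fix x assume "0 < x" "x < t"
  then show "\<exists>y. (DG 0 has_real_derivative y) (at x) \<and> y > 0"
    using dchain_D[OF dchain_DG, of x 0] DG_pos[of x 1] assms by (auto simp: S1_def)
next
  show "continuous_on {0..t} (DG 0)"
  proof (rule DERIV_atLeastAtMost_imp_continuous_on)
    fix x assume "0 \<le> x" "x \<le> t"
    then have "x \<in> S1" using assms by (simp add: S1_def)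
    then show "\<exists>y. (DG 0 has_real_derivative y) (at x)"
      by (intro exI) (rule dchain_D[OF dchain_DG])
  qed
qed




definition S0 :: "real set" where "S0 = {0<..<1}"
definition DF :: "nat \<Rightarrow> real \<Rightarrow> real" where "DF n x = (-1) ^ n * DG n ((-1) * x + 1/2)"

lemma open_S0: "open S0" by (simp add: S0_def)

lemma dchain_DF: "dchain S0 DF"
  unfolding DF_def[abs_def] by (rule dchain_affine'[OF dchain_DG]) (auto simp: S0_def S1_def)

lemma Gamma2: "Gamma (2::real) = 1"
  using Gamma_plus1[of "1::real"] by simp

lemma F_eq:
  assumes "x \<in> S0"
  shows "F x = DF 0 x"
proof -
  have x: "0 < x" "x < 1" using assms by (auto simp: S0_def)
  have r: "1 - (1/2 - x) = 1/2 + x" "1 + (1/2 - x) = 3/2 - x" "1/2 - (1/2 - x) = x"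
          "1/2 + (1/2 - x) = 1 - x" "(1/2 + x) + (3/2 - x) = (2::real)" "(-1) * x + 1/2 = 1/2 - x"
    by simp_all
  have "DF 0 x = Gamma (1/2 + x) * Gamma (3/2 - x) * (1 / x + 1 / (1 - x)) +
      (Digamma x + Digamma (1 - x) - Digamma (1/2 + x) - Digamma (3/2 - x))"
    unfolding DF_def by (simp only: r DG0 hf_def power_0 mult_1_left)
  also have "\<dots> = F x"
    unfolding F_def R_def Beta_def r Gamma2 using x by (simp add: field_simps)
  finally show ?thesis by simp
qed

lemma F_higher:
  assumes "x \<in> S0"
  shows "(deriv ^^ n) F x = (-1) ^ n * DG n (1/2 - x)"
  using dchain_higher[OF open_S0 dchain_DF, of F] F_eq assms by (simp add: DF_def)

lemma F_hasderiv:
  assumes "x \<in> S0"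
  shows "((deriv ^^ n) F has_real_derivative (deriv ^^ Suc n) F x) (at x)"
  by (rule dchain_higher_deriv[OF open_S0 dchain_DF F_eq assms])

lemma DG_pos_all:
  assumes "0 < t" "t < 1/2"
  shows "DG n t > 0"
proof (cases "n = 0")
  case True
  have "DG 0 0 > 0" unfolding DG00 using ln2_lt1 by simp
  then show ?thesis using G_gt[OF assms] True by simp
next
  case False
  then show ?thesis using DG_pos[OF assms] by simp
qed

lemma part1a: "strictly_completely_monotonic_on {0<..<1/2} F"
  unfolding strictly_completely_monotonic_on_def
proof (intro conjI allI ballI)
  fix n x assume x: "x \<in> {0<..<(1/2::real)}"
  then have xS: "x \<in> S0" by (simp add: S0_def)
  show "((deriv ^^ n) F has_real_derivative (deriv ^^ Suc n) F x) (at x)" by (rule F_hasderiv[OF xS])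
  have "DG n (1/2 - x) > 0" using x by (intro DG_pos_all) auto
  then show "(-1) ^ n * (deriv ^^ n) F x > 0" unfolding F_higher[OF xS] m1sq .
qed

lemma part1b: "absolutely_monotonic_on {1/2<..<1} F"
  unfolding absolutely_monotonic_on_def
proof (intro conjI allI ballI)
  fix n x assume x: "x \<in> {1/2<..<(1::real)}"
  then have xS: "x \<in> S0" by (simp add: S0_def)
  show "((deriv ^^ n) F has_real_derivative (deriv ^^ Suc n) F x) (at x)" by (rule F_hasderiv[OF xS])
  have t: "x - 1/2 \<in> S1" using x by (simp add: S1_def)
  have "DG n (1/2 - x) = (-1) ^ n * DG n (x - 1/2)" using DG_even[OF t, of n] by simp
  moreover have "DG n (x - 1/2) > 0" using x by (intro DG_pos_all) auto
  ultimately show "(deriv ^^ n) F x \<ge> 0" unfolding F_higher[OF xS] by (simp add: m1sq)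
qed

lemma F_val:
  assumes "x \<in> {0<..<1::real}"
  shows "F x = DG 0 \<bar>1/2 - x\<bar>"
proof -
  have xS: "x \<in> S0" using assms by (simp add: S0_def)
  have "F x = DG 0 (1/2 - x)" using F_higher[OF xS, of 0] by simp
  moreover have "DG 0 (1/2 - x) = DG 0 \<bar>1/2 - x\<bar>"
  proof (cases "x \<le> 1/2")
    case False
    have t: "x - 1/2 \<in> S1" using assms by (simp add: S1_def)
    show ?thesis using DG_even[OF t, of 0] False by simp
  qed simp
  ultimately show ?thesis by simp
qed

lemma part1c: "\<forall>x\<in>{0<..<1}. 4 - 4 * ln 2 \<le> F x"
proof
  fix x :: real assume x: "x \<in> {0<..<1}"
  show "4 - 4 * ln 2 \<le> F x"
  proof (cases "x = 1/2")
    case True then have z: "\<bar>1/2 - x\<bar> = 0" by simp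
    have "F x = 4 - 4 * ln 2" using F_val[OF x] DG00 unfolding z by simp
    then show ?thesis by linarith
  next
    case False
    have a: "0 < \<bar>1/2 - x\<bar>" "\<bar>1/2 - x\<bar> < 1/2" using x False by (auto simp: abs_if)
    then have "DG 0 \<bar>1/2 - x\<bar> > DG 0 0" by (intro G_gt)
    then show ?thesis using F_val[OF x] DG00 by simp
  qed
qed

lemma part1d: "\<forall>x\<in>{0<..<1}. F x = 4 - 4 * ln 2 \<longleftrightarrow> x = 1/2"
proof
  fix x :: real assume x: "x \<in> {0<..<1}"
  show "F x = 4 - 4 * ln 2 \<longleftrightarrow> x = 1/2"
  proof (cases "x = 1/2")
    case True then have z: "\<bar>1/2 - x\<bar> = 0" by simp
    have "F x = 4 - 4 * ln 2" using F_val[OF x] DG00 unfolding z by simp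
    then show ?thesis using True by blast
  next
    case False
    have a: "0 < \<bar>1/2 - x\<bar>" "\<bar>1/2 - x\<bar> < 1/2" using x False by (auto simp: abs_if)
    then have "DG 0 \<bar>1/2 - x\<bar> > DG 0 0" by (intro G_gt)
    then show ?thesis using F_val[OF x] DG00 False by simp
  qed
qed




lemma Beta_deriv2:
  assumes "p > 0" "q > (0::real)"
  shows "((\<lambda>q. Beta p q) has_real_derivative Beta p q * (Digamma q - Digamma (p + q))) (at q)"
proof -
  have g: "(Gamma has_real_derivative Gamma q * Digamma q) (at q)"
    by (rule has_field_derivative_Gamma[OF pos_not_npi[OF assms(2)]])
  have r0: "(rGamma has_real_derivative - rGamma (p + q) * Digamma (p + q)) (at (p + q))"
    by (rule has_field_derivative_rGamma_no_nonpos_int[OF pos_not_npi]) (use assms in simp)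
  have l: "((\<lambda>q. p + q) has_real_derivative 1) (at q)" by (auto intro!: derivative_eq_intros)
  have r: "((\<lambda>q. rGamma (p + q)) has_real_derivative - rGamma (p + q) * Digamma (p + q) * 1) (at q)"
    using DERIV_chain2[OF r0 l] .
  have gg: "((\<lambda>q. Gamma p * Gamma q) has_real_derivative Gamma p * (Gamma q * Digamma q)) (at q)"
    by (rule DERIV_cmult[OF g])
  have bb: "(\<lambda>q. Beta p q) = (\<lambda>q. Gamma p * Gamma q * rGamma (p + q))"
    by (simp add: Beta_altdef[abs_def])
  show ?thesis unfolding bb
    by (rule DERIV_cong[OF DERIV_mult[OF gg r]]) (simp add: algebra_simps)
qed

lemma Beta_pos: "p > 0 \<Longrightarrow> q > 0 \<Longrightarrow> Beta p q > (0::real)"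
  by (simp add: Beta_def)

definition S2 :: "real set" where "S2 = {0<..}"
lemma open_S2: "open S2" by (simp add: S2_def)

definition Ug :: "real \<Rightarrow> nat \<Rightarrow> real \<Rightarrow> real" where
  "Ug b n x = Polygamma n (1/2 + x) - Polygamma n (1 + b + x)"
definition gB :: "real \<Rightarrow> real \<Rightarrow> real" where "gB b x = Beta (1/2 + x) (1/2 + b)"
definition DQ :: "real \<Rightarrow> nat \<Rightarrow> real \<Rightarrow> real" where
  "DQ b n x = (-1) ^ n * fact n / (0 + x) ^ Suc n + (if n = 0 then 1 / b else 0)"
definition Dps2 :: "real \<Rightarrow> nat \<Rightarrow> real \<Rightarrow> real" where
  "Dps2 b n x = Polygamma n (0 + x) - Polygamma n (1/2 + x) + (if n = 0 then Digamma b - Digamma (1/2 + b) else 0)"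
definition Dfb :: "real \<Rightarrow> nat \<Rightarrow> real \<Rightarrow> real" where
  "Dfb b n x = (\<Sum>i=0..n. real (n choose i) * DQ b i x * expd (gB b) (Ug b) (n - i) x) + Dps2 b n x"

context
  fixes b :: real
  assumes b: "0 < b" "b < 1"
begin

lemma dchain_Ug: "dchain S2 (Ug b)"
proof -
  have "dchain S2 (\<lambda>n x. Polygamma n (1/2 + x) - Polygamma n ((1 + b) + x))"
    by (intro dchain_diff PG_plus open_S2) (use b in \<open>auto simp: S2_def\<close>)
  then show ?thesis by (rule dchain_cong[OF open_S2]) (simp add: Ug_def add.assoc)
qed

lemma gB_deriv:
  assumes "x \<in> S2"
  shows "(gB b has_real_derivative gB b x * Ug b 0 x) (at x)"
proof -
  have x: "x > 0" using assms by (simp add: S2_def)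
  have d: "((\<lambda>q. Beta (1/2 + b) q) has_real_derivative
      Beta (1/2 + b) (1/2 + x) * (Digamma (1/2 + x) - Digamma (1/2 + b + (1/2 + x)))) (at (1/2 + x))"
    by (rule Beta_deriv2) (use b x in auto)
  have l: "((\<lambda>x. 1/2 + x) has_real_derivative 1) (at x)" by (auto intro!: derivative_eq_intros)
  have gg: "gB b = (\<lambda>x. Beta (1/2 + b) (1/2 + x))"
    by (simp add: gB_def[abs_def] Beta_commute)
  have e: "1/2 + b + (1/2 + x) = 1 + b + x" by simp
  show ?thesis unfolding gg
    by (rule DERIV_cong[OF DERIV_chain2[OF d l]]) (simp add: Ug_def e)
qed

lemma dchain_gB: "dchain S2 (expd (gB b) (Ug b))"
  by (rule dchain_expd[OF dchain_Ug gB_deriv])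

lemma dchain_DQ: "dchain S2 (DQ b)"
proof -
  have "dchain S2 (\<lambda>n x. (-1) ^ n * fact n / (0 + x) ^ Suc n + (if n = 0 then 1 / b else 0))"
    by (intro dchain_add INV_plus dchain_const open_S2) (auto simp: S2_def)
  then show ?thesis by (rule dchain_cong[OF open_S2]) (simp add: DQ_def)
qed

lemma dchain_Dps2: "dchain S2 (Dps2 b)"
proof -
  have "dchain S2 (\<lambda>n x. Polygamma n (0 + x) - Polygamma n (1/2 + x) + (if n = 0 then Digamma b - Digamma (1/2 + b) else 0))"
    by (intro dchain_add dchain_diff PG_plus dchain_const open_S2) (auto simp: S2_def)
  then show ?thesis by (rule dchain_cong[OF open_S2]) (simp add: Dps2_def)
qed

lemma dchain_Dfb: "dchain S2 (Dfb b)"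
proof -
  have "dchain S2 (\<lambda>n x. (\<Sum>i=0..n. real (n choose i) * DQ b i x * expd (gB b) (Ug b) (n - i) x) + Dps2 b n x)"
    by (intro dchain_add dchain_mult dchain_DQ dchain_gB dchain_Dps2)
  then show ?thesis by (rule dchain_cong[OF open_S2]) (simp add: Dfb_def)
qed

lemma fb_eq: "x \<in> S2 \<Longrightarrow> fb b x = Dfb b 0 x"
  by (simp add: fb_def Dfb_def DQ_def Dps2_def gB_def R_def algebra_simps)

lemma Ug_sign:
  assumes "x > 0"
  shows "(-1) ^ m * Ug b m x \<le> 0"
proof (cases "even m")
  case True
  then have "Polygamma m (1/2 + x) \<le> Polygamma m (1 + b + x)"
    using assms b by (intro Polygamma_real_mono) auto
  then show ?thesis using True by (simp add: Ug_def)
next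
  case False
  then have "Polygamma m (1/2 + x) > Polygamma m (1 + b + x)"
    using assms b by (intro Polygamma_real_strict_antimono) auto
  then show ?thesis using False by (simp add: Ug_def)
qed

lemma gB_ge1:
  assumes "0 < x" "x < 1 - b"
  shows "gB b x \<ge> 1"
proof -
  have "Beta (1/2 + x) (3/2 - x) \<le> Beta (1/2 + x) (1/2 + b)"
  proof (rule DERIV_nonpos_imp_nonincreasing[of "1/2 + b" "3/2 - x" "\<lambda>q. Beta (1/2 + x) q"])
    show "1/2 + b \<le> 3/2 - x" using assms by simp
  next
    fix q assume q: "1/2 + b \<le> q" "q \<le> 3/2 - x"
    then have qp: "q > 0" using b by simp
    have "Digamma q \<le> Digamma (1/2 + x + q)"
      using qp assms by (intro Digamma_real_mono) auto
    moreover have "Beta (1/2 + x) q > 0" using qp assms by (intro Beta_pos) auto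
    ultimately have "Beta (1/2 + x) q * (Digamma q - Digamma (1/2 + x + q)) \<le> 0"
      by (simp add: mult_nonneg_nonpos)
    then show "\<exists>y. ((\<lambda>q. Beta (1/2 + x) q) has_real_derivative y) (at q) \<and> y \<le> 0"
      using Beta_deriv2[of "1/2 + x" q] qp assms by auto
  qed
  moreover have "Beta (1/2 + x) (3/2 - x) = hf \<bar>1/2 - x\<bar>"
  proof (cases "x \<le> 1/2")
    case True
    have r: "1 - (1/2 - x) = 1/2 + x" "1 + (1/2 - x) = 3/2 - x" "(1/2 + x) + (3/2 - x) = (2::real)" by simp_all
    show ?thesis using True unfolding Beta_def hf_def by (simp add: r Gamma2)
  next
    case False
    have r: "1 - (x - 1/2) = 3/2 - x" "1 + (x - 1/2) = 1/2 + x" "(1/2 + x) + (3/2 - x) = (2::real)" by simp_all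
    show ?thesis using False unfolding Beta_def hf_def by (simp add: r Gamma2)
  qed
  moreover have "hf \<bar>1/2 - x\<bar> \<ge> 1" using assms b by (intro hf_ge1) (auto simp: abs_if)
  ultimately show ?thesis unfolding gB_def by simp
qed


lemma DQ_sign: "x > 0 \<Longrightarrow> (-1) ^ i * DQ b i x \<ge> 0"
  using b by (cases "i = 0") (auto simp: DQ_def m1sq)

lemma Dps2_key:
  assumes "x > 0" "n \<ge> 1"
  shows "(-1) ^ n * Dps2 b n x + fact n / x ^ Suc n > 0"
proof -
  define s :: real where "s = (-1) ^ n"
  have ss: "s * s = 1" unfolding s_def by (simp add: power_add[symmetric])
  have p: "Polygamma n (x + 1) = Polygamma n x + (-1) ^ n * fact n / x ^ Suc n"
    by (rule Polygamma_plus1) (use assms in simp)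
  define A where "A = fact n / x ^ Suc n"
  have e: "Polygamma n x = Polygamma n (x + 1) - s * A"
    using p unfolding s_def A_def by simp
  have eq0: "(-1) ^ n * Dps2 b n x + A =
        s * (Polygamma n (x + 1) - Polygamma n (1/2 + x)) + (1 - s * s) * A"
    using assms(2) unfolding Dps2_def s_def[symmetric] by (simp add: e algebra_simps)
  have eq: "(-1) ^ n * Dps2 b n x + fact n / x ^ Suc n =
        s * (Polygamma n (x + 1) - Polygamma n (1/2 + x)) + (1 - s * s) * A"
    using eq0 unfolding A_def .
  show ?thesis
  proof (cases "even n")
    case True
    then have "s = 1" by (simp add: s_def)
    moreover have "Polygamma n (1/2 + x) < Polygamma n (x + 1)"
      using True assms by (intro Polygamma_real_strict_mono) auto
    ultimately show ?thesis unfolding eq ss by simp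
  next
    case False
    then have "s = -1" by (simp add: s_def)
    moreover have "Polygamma n (1/2 + x) > Polygamma n (x + 1)"
      using False assms by (intro Polygamma_real_strict_antimono) auto
    ultimately show ?thesis unfolding eq ss by simp
  qed
qed

lemma Dfb_pos:
  assumes "0 < x" "x < 1 - b" "n \<ge> 1"
  shows "(-1) ^ n * Dfb b n x > 0"
proof -
  define E where "E = (\<lambda>i. expd (gB b) (Ug b) i x)"
  have g1: "gB b x \<ge> 1" using gB_ge1 assms by simp
  have cm: "(-1) ^ j * E j \<ge> 0" for j
    unfolding E_def by (rule expd_cm) (use g1 Ug_sign assms in auto)
  have eqs: "(-1) ^ n * (\<Sum>i=0..n. real (n choose i) * DQ b i x * E (n - i)) =
        (\<Sum>i=0..n. real (n choose i) * ((-1) ^ i * DQ b i x) * ((-1) ^ (n - i) * E (n - i)))"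
    unfolding sum_distrib_left
  proof (intro sum.cong refl)
    fix i assume "i \<in> {0..n}"
    then have "(-1::real) ^ n = (-1) ^ i * (-1) ^ (n - i)"
      by (simp add: power_add[symmetric])
    then show "(-1) ^ n * (real (n choose i) * DQ b i x * E (n - i)) =
        real (n choose i) * ((-1) ^ i * DQ b i x) * ((-1) ^ (n - i) * E (n - i))"
      by (simp add: algebra_simps)
  qed
  have "real (n choose n) * ((-1) ^ n * DQ b n x) * ((-1) ^ (n - n) * E (n - n)) \<le>
        (\<Sum>i=0..n. real (n choose i) * ((-1) ^ i * DQ b i x) * ((-1) ^ (n - i) * E (n - i)))"
  proof (rule member_le_sum)
    fix i assume "i \<in> {0..n} - {n}"
    have a1: "0 \<le> (-1) ^ i * DQ b i x" using DQ_sign assms by simp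
    have a2: "0 \<le> (-1) ^ (n - i) * E (n - i)" using cm .
    have a0: "0 \<le> real (n choose i)" by simp
    show "0 \<le> real (n choose i) * ((-1) ^ i * DQ b i x) * ((-1) ^ (n - i) * E (n - i))"
      by (rule mult_nonneg_nonneg[OF mult_nonneg_nonneg[OF a0 a1] a2])
  qed simp_all
  moreover have "(-1) ^ n * DQ b n x = fact n / x ^ Suc n"
    using assms by (simp add: DQ_def m1sq)
  moreover have "E 0 = gB b x" by (simp add: E_def)
  ultimately have "fact n / x ^ Suc n * gB b x \<le> (-1) ^ n * (\<Sum>i=0..n. real (n choose i) * DQ b i x * E (n - i))"
    unfolding eqs by simp
  moreover have "fact n / x ^ Suc n \<le> fact n / x ^ Suc n * gB b x"
    using g1 assms mult_left_mono[of 1 "gB b x" "fact n / x ^ Suc n"] by simp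
  moreover have "(-1) ^ n * Dps2 b n x + fact n / x ^ Suc n > 0" by (rule Dps2_key) (use assms in auto)
  moreover have "(-1) ^ n * Dfb b n x = (-1) ^ n * (\<Sum>i=0..n. real (n choose i) * DQ b i x * E (n - i)) + (-1) ^ n * Dps2 b n x"
    unfolding Dfb_def E_def by (simp add: algebra_simps)
  ultimately show ?thesis by linarith
qed

lemma fb_at_end: "fb b (1 - b) = F (1 - b)"
proof -
  have r: "1/2 + (1 - b) = 3/2 - b" "3/2 - (1 - b) = 1/2 + b" "1 - (1 - b) = b" by simp_all
  have "1 - b \<noteq> 0" "b \<noteq> 0" using b by simp_all
  then show ?thesis unfolding fb_def F_def r by (simp add: field_simps)
qed

lemma fb_pos:
  assumes "0 < x" "x < 1 - b"
  shows "fb b x > 0"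
proof -
  have "Dfb b 0 (1 - b) < Dfb b 0 x"
  proof (rule DERIV_neg_imp_decreasing_open[OF assms(2)])
    fix y assume y: "x < y" "y < 1 - b"
    have "(Dfb b 0 has_real_derivative Dfb b 1 y) (at y)"
      using dchain_D[OF dchain_Dfb, of y 0] y assms by (simp add: S2_def)
    moreover have "(-1) ^ 1 * Dfb b 1 y > 0" using Dfb_pos[of y 1] y assms by simp
    ultimately show "\<exists>z. (Dfb b 0 has_real_derivative z) (at y) \<and> z < 0" by auto
  next
    show "continuous_on {x..1 - b} (Dfb b 0)"
    proof (rule DERIV_atLeastAtMost_imp_continuous_on)
      fix y assume "x \<le> y" "y \<le> 1 - b"
      then have "y \<in> S2" using assms by (simp add: S2_def)
      then show "\<exists>z. (Dfb b 0 has_real_derivative z) (at y)"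
        by (intro exI) (rule dchain_D[OF dchain_Dfb])
    qed
  qed
  moreover have "Dfb b 0 (1 - b) = F (1 - b)"
    using fb_eq[of "1 - b"] fb_at_end b by (simp add: S2_def)
  moreover have "F (1 - b) \<ge> 4 - 4 * ln 2" using part1c b by simp
  moreover have "Dfb b 0 x = fb b x" using fb_eq[of x] assms by (simp add: S2_def)
  ultimately show ?thesis using ln2_lt1 by linarith
qed

lemma part2_b: "strictly_completely_monotonic_on {0<..<1-b} (fb b)"
  unfolding strictly_completely_monotonic_on_def
proof (intro conjI allI ballI)
  fix n x assume x: "x \<in> {0<..<1-b}"
  then have xS: "x \<in> S2" by (simp add: S2_def)
  show "((deriv ^^ n) (fb b) has_real_derivative (deriv ^^ Suc n) (fb b) x) (at x)"
    by (rule dchain_higher_deriv[OF open_S2 dchain_Dfb fb_eq xS])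
  have h: "(deriv ^^ n) (fb b) x = Dfb b n x"
    using dchain_higher[OF open_S2 dchain_Dfb fb_eq] xS by blast
  show "(-1) ^ n * (deriv ^^ n) (fb b) x > 0"
  proof (cases "n = 0")
    case True
    then show ?thesis using h fb_pos[of x] fb_eq[OF xS] x by simp
  next
    case False
    then show ?thesis using h Dfb_pos[of x n] x by simp
  qed
qed

end


theorem proposition2:
  shows "strictly_completely_monotonic_on {0<..<1/2} F \<and>
         absolutely_monotonic_on {1/2<..<1} F \<and>
         (\<forall>x\<in>{0<..<1}. 4 - 4 * ln 2 \<le> F x) \<and>
         (\<forall>x\<in>{0<..<1}. F x = 4 - 4 * ln 2 \<longleftrightarrow> x = 1/2) \<and>
         (\<forall>b\<in>{0<..<1}. strictly_completely_monotonic_on {0<..<1-b} (fb b))"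
  using part1a part1b part1c part1d part2_b by auto


end
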